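(* Let $V, L\ge 1$, $\mathcal{D}=[V]^L$, let $\pi$ be a joint distribution on $\mathcal{D}\times\mathcal{D}$, and let $\kappa:[0,1]\to[0,1]$ be differentiable with $\kappa_0=0$, $\kappa_1=1$, $\kappa_t<1$ for $t<1$. Let $p_t(x)=\sum_{x_0,x_1}\pi(x_0,x_1)\prod_{i=1}^L[(1-\kappa_t)\delta_{x_0^i}(x^i)+\kappa_t\delta_{x_1^i}(x^i)]$ and $u_t^i(x^i,z)=\sum_{x_0,x_1}\frac{\dot\kappa_t}{1-\kappa_t}[\delta_{x_1^i}(x^i)-\delta_{z^i}(x^i)]\,p_t(x_0,x_1\mid z)$, where $p_t(x_0,x_1\mid z)=p_t(z\mid x_0,x_1)\pi(x_0,x_1)/p_t(z)$. Let $e_m:[V]\to\mathbb{R}^d$ be a token embedding and take the similarity $s(a,b)=\|e_m(a)-e_m(b)\|^2$. Then $c(x_0,x_1)=\sum_{i=1}^L\|e_m(x_1^i)-e_m(x_0^i)\|^2=\|e_m(x_1)-e_m(x_0)\|^2$, so that $$\int_0^1\sum_{x_t}p_t(x_t)\Big[\sum_{i=1}^L\sum_{x^i\ne x_t^i}u_t^i(x^i,x_t)\,\|e_m(x^i)-e_m(x_t^i)\|^2\Big]dt=\sum_{x_0,x_1}\|e_m(x_1)-e_m(x_0)\|^2\,\pi(x_0,x_1).$$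
   Context: For a sequence $x\in[V]^L$, $e_m(x)\in\mathbb{R}^{dL}$ denotes the concatenation $(e_m(x^1),\dots,e_m(x^L))$, and $\|\cdot\|$ is the Euclidean norm. $\delta_a(b)=1$ if $a=b$ and $0$ otherwise. Terms with $p_t(x_t)=0$ contribute zero. *)

theory Defs
  imports "HOL-Analysis.Analysis"
begin

text \<open>Token set [V] = {0..<V}; sequences [V]^L are lists of length L over it.
  Positions are indexed 0..<L instead of 1..L.\<close>

definition seqs :: "nat \<Rightarrow> nat \<Rightarrow> nat list set" where
  "seqs V L = {xs. length xs = L \<and> set xs \<subseteq> {..<V}}"

definition kdelta :: "nat \<Rightarrow> nat \<Rightarrow> real" where
  "kdelta a b = (if a = b then 1 else 0)"

definition cond_path :: "nat \<Rightarrow> (real \<Rightarrow> real) \<Rightarrow> real \<Rightarrow> nat list \<Rightarrow> nat list \<Rightarrow> nat list \<Rightarrow> real" where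
  "cond_path L \<kappa> t z x0 x1 =
     (\<Prod>i<L. (1 - \<kappa> t) * kdelta (x0 ! i) (z ! i) + \<kappa> t * kdelta (x1 ! i) (z ! i))"

definition marg_path :: "nat \<Rightarrow> nat \<Rightarrow> (nat list \<Rightarrow> nat list \<Rightarrow> real) \<Rightarrow> (real \<Rightarrow> real) \<Rightarrow> real \<Rightarrow> nat list \<Rightarrow> real" where
  "marg_path V L \<pi> \<kappa> t z =
     (\<Sum>(x0, x1) \<in> seqs V L \<times> seqs V L. \<pi> x0 x1 * cond_path L \<kappa> t z x0 x1)"

text \<open>posterior p_t(x0, x1 | z) = p_t(z | x0,x1) pi(x0,x1) / p_t(z)  (division by 0 gives 0)\<close>
definition posterior :: "nat \<Rightarrow> nat \<Rightarrow> (nat list \<Rightarrow> nat list \<Rightarrow> real) \<Rightarrow> (real \<Rightarrow> real) \<Rightarrow> real \<Rightarrow> nat list \<Rightarrow> nat list \<Rightarrow> nat list \<Rightarrow> real" where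
  "posterior V L \<pi> \<kappa> t x0 x1 z =
     cond_path L \<kappa> t z x0 x1 * \<pi> x0 x1 / marg_path V L \<pi> \<kappa> t z"

text \<open>velocity u_t^i(a, z) with kappa' the derivative of kappa\<close>
definition velocity :: "nat \<Rightarrow> nat \<Rightarrow> (nat list \<Rightarrow> nat list \<Rightarrow> real) \<Rightarrow> (real \<Rightarrow> real) \<Rightarrow> (real \<Rightarrow> real)
    \<Rightarrow> real \<Rightarrow> nat \<Rightarrow> nat \<Rightarrow> nat list \<Rightarrow> real" where
  "velocity V L \<pi> \<kappa> \<kappa>' t i a z =
     (\<Sum>(x0, x1) \<in> seqs V L \<times> seqs V L.
        \<kappa>' t / (1 - \<kappa> t) * (kdelta (x1 ! i) a - kdelta (z ! i) a) * posterior V L \<pi> \<kappa> t x0 x1 z)"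

text \<open>Concatenated embedding e_m(x) in R^{dL}, coordinates indexed by (position, component).\<close>
definition emb_cat :: "(nat \<Rightarrow> real ^ 'd) \<Rightarrow> nat list \<Rightarrow> nat \<times> 'd \<Rightarrow> real" where
  "emb_cat e x = (\<lambda>(i, j). e (x ! i) $ j)"

definition cat_norm :: "nat \<Rightarrow> (nat \<times> 'd::finite \<Rightarrow> real) \<Rightarrow> real" where
  "cat_norm L v = L2_set v ({..<L} \<times> UNIV)"

end

theory Submission
  imports Defs
begin

lemma seqs_finite: "finite (seqs V L)"
proof -
  have "seqs V L = {xs. set xs \<subseteq> {..<V} \<and> length xs = L}" by (auto simp: seqs_def)
  then show ?thesis using finite_lists_length_eq[of "{..<V}" L] by simp
qed

lemma seqs_0: "seqs V 0 = {[]}" by (auto simp: seqs_def)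

lemma seqs_Suc: "seqs V (Suc L) = (\<lambda>(v, xs). v # xs) ` ({..<V} \<times> seqs V L)"
proof (rule set_eqI)
  fix ys show "ys \<in> seqs V (Suc L) \<longleftrightarrow> ys \<in> (\<lambda>(v, xs). v # xs) ` ({..<V} \<times> seqs V L)"
    by (cases ys) (auto simp: seqs_def)
qed

lemma prod_sum_seqs:
  "(\<Sum>xs\<in>seqs V L. \<Prod>j<L. f j (xs ! j)) = (\<Prod>j<L. \<Sum>v<V. (f j v :: real))"
proof (induction L arbitrary: f)
  case 0 then show ?case by (simp add: seqs_0)
next
  case (Suc L)
  have inj: "inj_on (\<lambda>(v, xs). v # xs) ({..<V} \<times> seqs V L)" by (auto simp: inj_on_def)
  have "(\<Sum>xs\<in>seqs V (Suc L). \<Prod>j<Suc L. f j (xs ! j))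
      = (\<Sum>(v,xs)\<in>{..<V} \<times> seqs V L. \<Prod>j<Suc L. f j ((v#xs) ! j))"
    unfolding seqs_Suc by (subst sum.reindex[OF inj]) (simp add: case_prod_unfold)
  also have "\<dots> = (\<Sum>v<V. \<Sum>xs\<in>seqs V L. f 0 v * (\<Prod>j<L. f (Suc j) (xs ! j)))"
    by (subst sum.cartesian_product[symmetric]) (simp del: prod.lessThan_Suc add: prod.lessThan_Suc_shift)
  also have "\<dots> = (\<Sum>v<V. f 0 v * (\<Prod>j<L. \<Sum>v<V. f (Suc j) v))"
    by (simp add: sum_distrib_left[symmetric] Suc.IH[of "\<lambda>j. f (Suc j)"])
  also have "\<dots> = (\<Prod>j<Suc L. \<Sum>v<V. f j v)"
    by (simp del: prod.lessThan_Suc add: prod.lessThan_Suc_shift sum_distrib_right)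
  finally show ?case .
qed

lemma marg_seqs:
  assumes "i < L"
  shows "(\<Sum>xs\<in>seqs V L. (\<Prod>j<L. w j (xs ! j)) * g (xs ! i))
     = (\<Sum>v<V. w i v * g v) * (\<Prod>j\<in>{..<L}-{i}. \<Sum>v<V. (w j v :: real))"
proof -
  define f where "f j v = w j v * (if j = i then g v else 1)" for j v
  have "(\<Prod>j<L. f j (xs ! j)) = (\<Prod>j<L. w j (xs ! j)) * g (xs ! i)" for xs
    using assms by (simp add: f_def prod.distrib prod.delta)
  then have "(\<Sum>xs\<in>seqs V L. (\<Prod>j<L. w j (xs ! j)) * g (xs ! i)) = (\<Prod>j<L. \<Sum>v<V. f j v)"
    by (simp add: prod_sum_seqs[symmetric])
  also have "\<dots> = (\<Sum>v<V. f i v) * (\<Prod>j\<in>{..<L}-{i}. \<Sum>v<V. f j v)"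
    using assms by (subst prod.remove[of _ i]) auto
  also have "\<dots> = (\<Sum>v<V. w i v * g v) * (\<Prod>j\<in>{..<L}-{i}. \<Sum>v<V. (w j v :: real))"
    by (simp add: f_def)
  finally show ?thesis .
qed

lemma sum_kdelta: "a < V \<Longrightarrow> (\<Sum>v<V. kdelta a v * h v) = (h a :: real)"
  by (simp add: kdelta_def if_distrib[where f="\<lambda>x. x * _"] sum.delta cong: if_cong)

lemma cond_marg:
  assumes "i < L" "x0 \<in> seqs V L" "x1 \<in> seqs V L"
  shows "(\<Sum>xs\<in>seqs V L. cond_path L \<kappa> t xs x0 x1 * g (xs ! i))
       = (1 - \<kappa> t) * g (x0 ! i) + \<kappa> t * g (x1 ! i)"
proof -
  have lt: "x0 ! j < V" "x1 ! j < V" if "j < L" for j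
  proof -
    have "set x0 \<subseteq> {..<V}" "length x0 = L" "set x1 \<subseteq> {..<V}" "length x1 = L"
      using assms(2,3) by (auto simp: seqs_def)
    moreover have "x0 ! j \<in> set x0" "x1 ! j \<in> set x1" using calculation that by simp_all
    ultimately show "x0 ! j < V" "x1 ! j < V" by auto
  qed
  have s: "(\<Sum>v<V. ((1 - \<kappa> t) * kdelta (x0 ! j) v + \<kappa> t * kdelta (x1 ! j) v) * h v)
       = (1 - \<kappa> t) * h (x0 ! j) + \<kappa> t * h (x1 ! j)" if "j < L" for j h
    using lt[OF that] by (simp add: distrib_right sum.distrib mult.assoc sum_distrib_left[symmetric] sum_kdelta)
  show ?thesis
    unfolding cond_path_def
    apply (subst marg_seqs[OF assms(1)])
    using s[of _ "\<lambda>_. 1"] s[OF assms(1)] by simp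
qed


lemma norm_sq_vec: "(norm (x :: real ^ 'd))\<^sup>2 = (\<Sum>j\<in>UNIV. (x $ j)\<^sup>2)"
  unfolding norm_vec_def L2_set_def by (simp add: sum_nonneg)

lemma cat_norm_sq:
  "(\<Sum>i<L. (norm (e (x1 ! i) - e (x0 ! i)))\<^sup>2)
     = (cat_norm L (\<lambda>p. emb_cat e x1 p - emb_cat e x0 p))\<^sup>2"
proof -
  have "(cat_norm L (\<lambda>p. emb_cat e x1 p - emb_cat e x0 p))\<^sup>2
      = (\<Sum>p\<in>{..<L} \<times> UNIV. (emb_cat e x1 p - emb_cat e x0 p)\<^sup>2)"
    unfolding cat_norm_def L2_set_def by (simp add: sum_nonneg)
  also have "\<dots> = (\<Sum>i<L. \<Sum>j\<in>UNIV. (e (x1 ! i) $ j - e (x0 ! i) $ j)\<^sup>2)"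
    by (simp add: sum.cartesian_product emb_cat_def split_def)
  also have "\<dots> = (\<Sum>i<L. (norm (e (x1 ! i) - e (x0 ! i)))\<^sup>2)"
    by (simp add: norm_sq_vec)
  finally show ?thesis ..
qed

lemma sum_a:
  assumes "b < V" "z < V" "s z z = (0::real)"
  shows "(\<Sum>a\<in>{..<V} - {z}. kdelta b a * s a z) = s b z"
proof (cases "b = z")
  case True then show ?thesis using assms by (simp add: kdelta_def)
next
  case False
  have "(\<Sum>a\<in>{..<V} - {z}. kdelta b a * s a z) = (\<Sum>a\<in>{..<V} - {z}. if b = a then s a z else 0)"
    by (rule sum.cong) (auto simp: kdelta_def)
  also have "\<dots> = s b z" using assms False by (simp add: sum.delta)
  finally show ?thesis .
qed

lemma seqs_nth_lt: "x \<in> seqs V L \<Longrightarrow> i < L \<Longrightarrow> x ! i < V"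
proof -
  assume a: "x \<in> seqs V L" "i < L"
  then have "set x \<subseteq> {..<V}" "length x = L" by (auto simp: seqs_def)
  moreover have "x ! i \<in> set x" using calculation a by simp
  ultimately show ?thesis by auto
qed

lemma swap_pair: "(\<Sum>a\<in>A. \<Sum>(x,y)\<in>B. f a x y) = (\<Sum>(x,y)\<in>B. \<Sum>a\<in>A. (f a x y :: real))"
  unfolding split_def by (rule sum.swap)

theorem corollary2:
  fixes V L :: nat
    and \<pi> :: "nat list \<Rightarrow> nat list \<Rightarrow> real"
    and \<kappa> \<kappa>' :: "real \<Rightarrow> real"
    and e :: "nat \<Rightarrow> real ^ 'd"
  assumes "V \<ge> 1" and "L \<ge> 1"
    and pi_nonneg: "\<forall>x0\<in>seqs V L. \<forall>x1\<in>seqs V L. \<pi> x0 x1 \<ge> 0"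
    and pi_sum: "(\<Sum>(x0, x1) \<in> seqs V L \<times> seqs V L. \<pi> x0 x1) = 1"
    and kappa_deriv: "\<forall>t\<in>{0..1}. (\<kappa> has_real_derivative \<kappa>' t) (at t within {0..1})"
    and kappa_range: "\<forall>t\<in>{0..1}. \<kappa> t \<in> {0..1}"
    and "\<kappa> 0 = 0" and "\<kappa> 1 = 1"
    and "\<forall>t\<in>{0..<1}. \<kappa> t < 1"
  shows "(\<forall>x0\<in>seqs V L. \<forall>x1\<in>seqs V L.
            (\<Sum>i<L. (norm (e (x1 ! i) - e (x0 ! i)))\<^sup>2)
              = (cat_norm L (\<lambda>p. emb_cat e x1 p - emb_cat e x0 p))\<^sup>2)
       \<and> ((\<lambda>t. \<Sum>xt\<in>seqs V L. marg_path V L \<pi> \<kappa> t xt *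
               (\<Sum>i<L. \<Sum>a\<in>{..<V} - {xt ! i}.
                  velocity V L \<pi> \<kappa> \<kappa>' t i a xt * (norm (e a - e (xt ! i)))\<^sup>2))
          has_integral
            (\<Sum>(x0, x1) \<in> seqs V L \<times> seqs V L.
               (cat_norm L (\<lambda>p. emb_cat e x1 p - emb_cat e x0 p))\<^sup>2 * \<pi> x0 x1)) {0..1}"
proof -
  let ?S = "seqs V L"
  let ?P = "?S \<times> ?S"
  define s where "s a b = (norm (e a - e b))\<^sup>2" for a b
  have s0: "s z z = 0" for z by (simp add: s_def)
  define C where "C = (\<Sum>(x0, x1) \<in> ?P. (\<Sum>i<L. s (x1 ! i) (x0 ! i)) * \<pi> x0 x1)"
  have rhs: "(\<Sum>(x0, x1) \<in> ?P. (cat_norm L (\<lambda>p. emb_cat e x1 p - emb_cat e x0 p))\<^sup>2 * \<pi> x0 x1) = C"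
    unfolding C_def s_def cat_norm_sq ..
  define F where "F t = (\<Sum>xt\<in>seqs V L. marg_path V L \<pi> \<kappa> t xt *
               (\<Sum>i<L. \<Sum>a\<in>{..<V} - {xt ! i}.
                  velocity V L \<pi> \<kappa> \<kappa>' t i a xt * (norm (e a - e (xt ! i)))\<^sup>2))" for t
  have key: "F t = \<kappa>' t * C" if t: "t \<in> {0..<1}" for t
  proof -
    define k where "k = \<kappa> t"
    define c where "c = \<kappa>' t / (1 - k)"
    have k0: "0 \<le> k" and k1: "k < 1" using t kappa_range assms(9) by (auto simp: k_def)
    have cnn: "cond_path L \<kappa> t xt x0 x1 \<ge> 0" for xt x0 x1
      unfolding cond_path_def using k0 k1 by (intro prod_nonneg) (auto simp: kdelta_def k_def)
    have pp: "marg_path V L \<pi> \<kappa> t xt * posterior V L \<pi> \<kappa> t x0 x1 xt = cond_path L \<kappa> t xt x0 x1 * \<pi> x0 x1"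
      if "x0 \<in> ?S" "x1 \<in> ?S" for xt x0 x1
    proof (cases "marg_path V L \<pi> \<kappa> t xt = 0")
      case True
      have "\<forall>p\<in>?P. (case p of (x0, x1) \<Rightarrow> \<pi> x0 x1 * cond_path L \<kappa> t xt x0 x1) = 0"
        using True unfolding marg_path_def
        by (subst sum_nonneg_eq_0_iff[symmetric]) (auto simp: seqs_finite pi_nonneg cnn)
      then show ?thesis using that True by (auto simp: posterior_def)
    next
      case False then show ?thesis by (simp add: posterior_def)
    qed
    have vel: "marg_path V L \<pi> \<kappa> t xt * velocity V L \<pi> \<kappa> \<kappa>' t i a xt
        = (\<Sum>(x0, x1)\<in>?P. c * (kdelta (x1 ! i) a * (cond_path L \<kappa> t xt x0 x1 * \<pi> x0 x1)))"
      if "a \<noteq> xt ! i" for xt i a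
      unfolding velocity_def sum_distrib_left
      by (rule sum.cong) (use that pp in \<open>auto simp: kdelta_def c_def k_def\<close>)
    have "F t = (\<Sum>xt\<in>?S. \<Sum>i<L. \<Sum>a\<in>{..<V} - {xt ! i}. \<Sum>(x0, x1)\<in>?P.
              c * (kdelta (x1 ! i) a * (cond_path L \<kappa> t xt x0 x1 * \<pi> x0 x1)) * s a (xt ! i))"
      unfolding F_def sum_distrib_left
      by (intro sum.cong refl) (simp add: mult.assoc[symmetric] vel sum_distrib_right s_def case_prod_unfold)
    also have "\<dots> = (\<Sum>xt\<in>?S. \<Sum>i<L. \<Sum>(x0, x1)\<in>?P. \<Sum>a\<in>{..<V} - {xt ! i}.
              c * (kdelta (x1 ! i) a * (cond_path L \<kappa> t xt x0 x1 * \<pi> x0 x1)) * s a (xt ! i))"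
      by (intro sum.cong refl) (rule swap_pair)
    also have "\<dots> = (\<Sum>xt\<in>?S. \<Sum>i<L. \<Sum>(x0, x1)\<in>?P.
              c * \<pi> x0 x1 * (cond_path L \<kappa> t xt x0 x1 * s (x1 ! i) (xt ! i)))"
    proof (intro sum.cong refl)
      fix xt i p assume h: "xt \<in> ?S" "i \<in> {..<L}" "p \<in> ?P"
      obtain x0 x1 where p: "p = (x0, x1)" by (cases p)
      have "(\<Sum>a\<in>{..<V} - {xt ! i}. c * (kdelta (x1 ! i) a * (cond_path L \<kappa> t xt x0 x1 * \<pi> x0 x1)) * s a (xt ! i))
          = c * \<pi> x0 x1 * cond_path L \<kappa> t xt x0 x1 * (\<Sum>a\<in>{..<V} - {xt ! i}. kdelta (x1 ! i) a * s a (xt ! i))"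
        by (simp add: sum_distrib_left mult_ac)
      also have "\<dots> = c * \<pi> x0 x1 * (cond_path L \<kappa> t xt x0 x1 * s (x1 ! i) (xt ! i))"
        using h p by (subst sum_a) (auto simp: seqs_nth_lt s0)
      finally show "(case p of (x0, x1) \<Rightarrow> \<Sum>a\<in>{..<V} - {xt ! i}. c * (kdelta (x1 ! i) a * (cond_path L \<kappa> t xt x0 x1 * \<pi> x0 x1)) * s a (xt ! i))
          = (case p of (x0, x1) \<Rightarrow> c * \<pi> x0 x1 * (cond_path L \<kappa> t xt x0 x1 * s (x1 ! i) (xt ! i)))"
        using p by simp
    qed
    also have "\<dots> = (\<Sum>(x0, x1)\<in>?P. \<Sum>i<L. \<Sum>xt\<in>?S.
              c * \<pi> x0 x1 * (cond_path L \<kappa> t xt x0 x1 * s (x1 ! i) (xt ! i)))"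
      by (subst sum.swap) (simp only: swap_pair)
    also have "\<dots> = (\<Sum>(x0, x1)\<in>?P. \<Sum>i<L. c * \<pi> x0 x1 * ((1 - k) * s (x1 ! i) (x0 ! i)))"
    proof (intro sum.cong refl)
      fix p assume h: "p \<in> ?P"
      obtain x0 x1 where p: "p = (x0, x1)" by (cases p)
      have "(\<Sum>xt\<in>?S. c * \<pi> x0 x1 * (cond_path L \<kappa> t xt x0 x1 * s (x1 ! i) (xt ! i)))
          = c * \<pi> x0 x1 * ((1 - k) * s (x1 ! i) (x0 ! i))" if "i < L" for i
        using h p that by (simp add: sum_distrib_left[symmetric] cond_marg[where g = "s (x1 ! i)"] s0 k_def)
      then show "(case p of (x0, x1) \<Rightarrow> \<Sum>i<L. \<Sum>xt\<in>?S. c * \<pi> x0 x1 * (cond_path L \<kappa> t xt x0 x1 * s (x1 ! i) (xt ! i)))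
         = (case p of (x0, x1) \<Rightarrow> \<Sum>i<L. c * \<pi> x0 x1 * ((1 - k) * s (x1 ! i) (x0 ! i)))"
        using p by simp
    qed
    also have "\<dots> = \<kappa>' t * C"
      unfolding C_def sum_distrib_left using k1
      by (intro sum.cong refl) (auto simp: c_def sum_distrib_left sum_distrib_right mult_ac)
    finally show ?thesis .
  qed
  have ftc: "((\<lambda>t. \<kappa>' t * C) has_integral (\<kappa> 1 * C - \<kappa> 0 * C)) {0..1}"
    by (rule fundamental_theorem_of_calculus)
      (use kappa_deriv in \<open>auto simp: has_real_derivative_iff_has_vector_derivative[symmetric] intro!: derivative_eq_intros\<close>)
  have "(F has_integral C) {0..1}"
  proof (rule has_integral_spike_finite[of "{1}" "{0..1}" F "\<lambda>t. \<kappa>' t * C" C])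
    show "((\<lambda>t. \<kappa>' t * C) has_integral C) {0..1}" using ftc assms(7,8) by simp
    fix x assume "x \<in> {0..1} - {1::real}"
    then show "F x = \<kappa>' x * C" using key by auto
  qed simp
  then show ?thesis unfolding F_def rhs using cat_norm_sq by blast
qed

end
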